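(* Let $M,N$ be positive integers and $C_0,\dots,C_{N-1}\in\{0,1,\dots,M-1\}$ arbitrary. For $p\in\{0,\dots,M-1\}$, $q\in\{0,\dots,N-1\}$ let $\bm\psi_{p,q}\in\mathbb{C}^N$ have entries $[\bm\psi_{p,q}]_n=\frac{1}{\sqrt N}e^{j\frac{2\pi p}{M}C_n+j\frac{2\pi q}{N}n}$, $n=0,\dots,N-1$, let $\bm\Psi_q=[\bm\psi_{0,q},\dots,\bm\psi_{M-1,q}]$ and $\bm\Psi=[\bm\Psi_0,\dots,\bm\Psi_{N-1}]\in\mathbb{C}^{N\times MN}$. Then the spectral norm of $\bm\Psi$ equals $\|\bm\Psi\|_s=\sqrt M$.
   Context: $j$ denotes the imaginary unit; $\|\cdot\|_s$ is the spectral norm (largest singular value). *)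

theory Defs
  imports "Jordan_Normal_Form.Jordan_Normal_Form"
begin

definition herm_adj :: "complex mat \<Rightarrow> complex mat" where
  "herm_adj A = mat (dim_col A) (dim_row A) (\<lambda>(i,j). cnj (A $$ (j,i)))"

definition singular_values :: "complex mat \<Rightarrow> real set" where
  "singular_values A = {\<sigma>. \<sigma> \<ge> 0 \<and> eigenvalue (herm_adj A * A) (complex_of_real (\<sigma>^2))}"

definition spectral_norm :: "complex mat \<Rightarrow> real" where
  "spectral_norm A = Max (singular_values A)"

(* Psi in C^{N x MN}: column index k = q*M + p corresponds to psi_{p,q} *)
definition Psi_mat :: "nat \<Rightarrow> nat \<Rightarrow> (nat \<Rightarrow> nat) \<Rightarrow> complex mat" where
  "Psi_mat M N C = mat N (M * N) (\<lambda>(n,k).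
     let p = k mod M; q = k div M in
     (1 / complex_of_real (sqrt (real N))) *
     exp (\<i> * complex_of_real (2 * pi * real p / real M) * of_nat (C n)
        + \<i> * complex_of_real (2 * pi * real q / real N) * of_nat n))"

end

theory Submission
  imports Defs
begin


lemma sum_divmod:
  fixes F G :: "nat \<Rightarrow> 'a::comm_semiring_1"
  assumes "M > 0"
  shows "(\<Sum>k<M*N. F (k mod M) * G (k div M)) = (\<Sum>p<M. F p) * (\<Sum>q<N. G q)"
proof -
  have "(\<Sum>k<M*N. F (k mod M) * G (k div M)) = (\<Sum>(p,q)\<in>{..<M}\<times>{..<N}. F p * G q)"
  proof (rule sum.reindex_bij_witness[where i="\<lambda>(p,q). q*M+p" and j="\<lambda>k. (k mod M, k div M)"])
    fix a assume "a \<in> {..<M} \<times> {..<N}"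
    then obtain p q where a: "a = (p,q)" "p < M" "q < N" by auto
    have "q*M+p < M*N"
    proof -
      have "q*M+p < q*M + M" using a by simp
      also have "\<dots> = (Suc q)*M" by simp
      also have "\<dots> \<le> N*M" using a by (intro mult_right_mono) auto
      finally show ?thesis by (simp add: mult.commute)
    qed
    then show "(case a of (p, q) \<Rightarrow> q * M + p) \<in> {..<M * N}" using a by simp
    show "((case a of (p, q) \<Rightarrow> q * M + p) mod M, (case a of (p, q) \<Rightarrow> q * M + p) div M) = a"
      using a by simp
  next
    fix k assume k: "k \<in> {..<M*N}"
    show "(case (k mod M, k div M) of (p, q) \<Rightarrow> q * M + p) = k" by simp
    show "(k mod M, k div M) \<in> {..<M} \<times> {..<N}" using k assms
      by (auto simp: less_mult_imp_div_less mult.commute)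
    show "(case (k mod M, k div M) of (p, q) \<Rightarrow> F p * G q) = F (k mod M) * G (k div M)" by simp
  qed
  also have "\<dots> = (\<Sum>p<M. F p) * (\<Sum>q<N. G q)"
    by (simp add: sum.cartesian_product[symmetric] sum_product)
  finally show ?thesis .
qed

lemma root_sum:
  fixes d :: int
  assumes "d \<noteq> 0" "\<bar>d\<bar> < int N"
  shows "(\<Sum>q<N. cis (2 * pi * real q * of_int d / real N)) = 0"
proof -
  define \<omega> where "\<omega> = cis (2 * pi * of_int d / real N)"
  have N: "N > 0" using assms by auto
  have [simp]: "\<omega> \<noteq> 1"
  proof
    assume "\<omega> = 1"
    then obtain k :: int where "2 * pi * of_int d / real N = of_int k * (2 * pi)"
      by (auto simp: \<omega>_def complex_eq_iff cos_one_2pi_int)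
    with N have "real_of_int d = real N * of_int k" by (simp add: field_simps)
    then have "d = int N * k" by (metis of_int_eq_iff of_int_mult of_int_of_nat_eq)
    with assms show False
      by (metis abs_mult abs_of_nat mult_cancel_left2 mult_le_cancel_left1 abs_ge_zero not_le
          mult_eq_0_iff zero_less_abs_iff of_nat_0_le_iff order.strict_trans1 linorder_not_less
          int_one_le_iff_zero_less)
  qed
  have "(\<Sum>q<N. cis (2 * pi * real q * of_int d / real N)) = (\<Sum>q<N. \<omega> ^ q)"
    by (intro sum.cong refl) (auto simp: \<omega>_def DeMoivre mult_ac)
  also have "\<dots> = (\<omega> ^ N - 1) / (\<omega> - 1)"
    by (subst geometric_sum) auto
  also have "\<omega> ^ N = cis (2 * pi * of_int d)" using N by (auto simp: \<omega>_def DeMoivre)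
  also have "\<dots> = 1" by (simp add: cis_multiple_2pi)
  finally show ?thesis by simp
qed


lemma Psi_entry:
  assumes "n < N" "k < M * N"
  shows "Psi_mat M N C $$ (n,k) = complex_of_real (1 / sqrt (real N)) *
     cis (2 * pi * real (k mod M) / real M * real (C n) + 2 * pi * real (k div M) / real N * real n)"
proof -
  have "\<i> * complex_of_real (2 * pi * real (k mod M) / real M) * of_nat (C n)
        + \<i> * complex_of_real (2 * pi * real (k div M) / real N) * of_nat n
      = \<i> * complex_of_real (2 * pi * real (k mod M) / real M * real (C n) + 2 * pi * real (k div M) / real N * real n)"
    by (simp add: algebra_simps)
  then show ?thesis using assms
    by (simp add: Psi_mat_def cis_conv_exp Let_def)
qed

lemma Psi_gram:
  assumes M: "M > 0" and N: "N > 0"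
  shows "Psi_mat M N C * herm_adj (Psi_mat M N C) = of_nat M \<cdot>\<^sub>m 1\<^sub>m N"
proof (rule eq_matI)
  let ?A = "Psi_mat M N C"
  show "dim_row (?A * herm_adj ?A) = dim_row (of_nat M \<cdot>\<^sub>m 1\<^sub>m N :: complex mat)"
    by (simp add: Psi_mat_def herm_adj_def)
  show "dim_col (?A * herm_adj ?A) = dim_col (of_nat M \<cdot>\<^sub>m 1\<^sub>m N :: complex mat)"
    by (simp add: Psi_mat_def herm_adj_def)
  fix n n' assume n: "n < dim_row (of_nat M \<cdot>\<^sub>m 1\<^sub>m N :: complex mat)"
    and n': "n' < dim_col (of_nat M \<cdot>\<^sub>m 1\<^sub>m N :: complex mat)"
  then have n: "n < N" and n': "n' < N" by auto
  define F where "F p = cis (2 * pi * real p * (real (C n) - real (C n')) / real M)" for p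
  define G where "G q = cis (2 * pi * real q * of_int (int n - int n') / real N)" for q
  have "(?A * herm_adj ?A) $$ (n,n') = (\<Sum>k<M*N. ?A $$ (n,k) * cnj (?A $$ (n',k)))"
    using n n' by (simp add: Psi_mat_def herm_adj_def scalar_prod_def lessThan_atLeast0 row_def col_def)
  also have "\<dots> = (\<Sum>k<M*N. complex_of_real (1 / real N) * (F (k mod M) * G (k div M)))"
  proof (intro sum.cong refl)
    fix k assume k: "k \<in> {..<M*N}"
    have s: "(1 / sqrt (real N)) * (1 / sqrt (real N)) = (1 / real N)"
      using N by simp
    show "?A $$ (n,k) * cnj (?A $$ (n',k)) = complex_of_real (1 / real N) * (F (k mod M) * G (k div M))"
    proof -
      have k': "k < M*N" using k by simp
      have e: "2 * pi * real (k mod M) / real M * real (C n) + 2 * pi * real (k div M) / real N * real n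
          + - (2 * pi * real (k mod M) / real M * real (C n') + 2 * pi * real (k div M) / real N * real n')
          = 2 * pi * real (k mod M) * (real (C n) - real (C n')) / real M
          + 2 * pi * real (k div M) * of_int (int n - int n') / real N"
        by (simp add: algebra_simps diff_divide_distrib add_divide_distrib)
      have g: "\<And>a b (c::real). complex_of_real c * cis a * cnj (complex_of_real c * cis b) = complex_of_real (c*c) * cis (a + - b)"
        by (simp only: complex_cnj_mult complex_cnj_complex_of_real cis_cnj of_real_mult cis_mult[symmetric] ac_simps)
      show ?thesis
        unfolding Psi_entry[OF n k'] Psi_entry[OF n' k'] F_def G_def
        apply (simp only: g e s cis_mult)
        done
    qed
  qed
  also have "\<dots> = complex_of_real (1 / real N) * ((\<Sum>p<M. F p) * (\<Sum>q<N. G q))"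
    by (simp only: sum_distrib_left[symmetric] sum_divmod[OF M])
  also have "\<dots> = (of_nat M \<cdot>\<^sub>m 1\<^sub>m N :: complex mat) $$ (n,n')"
  proof (cases "n = n'")
    case True
    then show ?thesis using n N by (simp add: F_def G_def)
  next
    case False
    have "(\<Sum>q<N. G q) = 0" unfolding G_def
      by (rule root_sum) (use False n n' in auto)
    then show ?thesis using False n n' by simp
  qed
  finally show "(?A * herm_adj ?A) $$ (n,n') = (of_nat M \<cdot>\<^sub>m 1\<^sub>m N :: complex mat) $$ (n,n')" .
qed


lemma smI: assumes w: "(w :: 'a::comm_ring_1 vec) \<in> carrier_vec n"
  shows "(c \<cdot>\<^sub>m 1\<^sub>m n) *\<^sub>v w = c \<cdot>\<^sub>v w"
proof (rule eq_vecI)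
  fix i assume i: "i < dim_vec (c \<cdot>\<^sub>v w)"
  then have i: "i < n" using w by simp
  have "(\<Sum>ia = 0..<n. c * (if i = ia then 1 else 0) * w $ ia) = (\<Sum>ia \<in> {0..<n}. if i = ia then c * w $ ia else 0)"
    by (intro sum.cong) auto
  also have "\<dots> = c * w $ i" using i by (simp add: sum.delta)
  finally show "((c \<cdot>\<^sub>m 1\<^sub>m n) *\<^sub>v w) $ i = (c \<cdot>\<^sub>v w) $ i" using w i by (simp add: scalar_prod_def row_def)
qed (use w in simp)

lemma zvI: assumes "(A :: 'a::comm_ring_1 mat) \<in> carrier_mat n m" shows "A *\<^sub>v 0\<^sub>v m = 0\<^sub>v n"
  by (rule eq_vecI) (use assms in \<open>auto simp: scalar_prod_def\<close>)

lemma eig_cases: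
  assumes AB: "A * B = of_nat M \<cdot>\<^sub>m 1\<^sub>m n" and A: "A \<in> carrier_mat n m" and B: "B \<in> carrier_mat m n"
    and ev: "eigenvalue (B * A) (l::complex)"
  shows "l = 0 \<or> l = of_nat M"
proof -
  from ev obtain v where v: "v \<in> carrier_vec m" "v \<noteq> 0\<^sub>v m" "(B * A) *\<^sub>v v = l \<cdot>\<^sub>v v"
    unfolding eigenvalue_def eigenvector_def using A B by auto
  define w where "w = A *\<^sub>v v"
  have w: "w \<in> carrier_vec n" using A v unfolding w_def by auto
  have BA: "B * A \<in> carrier_mat m m" using A B by auto
  have AB': "A * B \<in> carrier_mat n n" using A B by auto
  have "A *\<^sub>v ((B * A) *\<^sub>v v) = (A * (B * A)) *\<^sub>v v"
    using assoc_mult_mat_vec[OF A BA v(1)] by (rule sym)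
  also have "A * (B * A) = (A * B) * A" using assoc_mult_mat[OF A B A] by (rule sym)
  also have "(A * B) * A *\<^sub>v v = (A * B) *\<^sub>v w"
    unfolding w_def using assoc_mult_mat_vec[OF AB' A v(1)] .
  also have "\<dots> = of_nat M \<cdot>\<^sub>v w" using AB w by (simp add: smI)
  finally have 1: "A *\<^sub>v (l \<cdot>\<^sub>v v) = of_nat M \<cdot>\<^sub>v w" using v by simp
  have 2: "A *\<^sub>v (l \<cdot>\<^sub>v v) = l \<cdot>\<^sub>v w" using A v unfolding w_def by (simp add: mult_mat_vec)
  show ?thesis
  proof (cases "w = 0\<^sub>v n")
    case True
    have "(B * A) *\<^sub>v v = B *\<^sub>v w" using A B v unfolding w_def by (simp add: assoc_mult_mat_vec)
    also have "\<dots> = 0\<^sub>v m" using True B by (simp add: zvI)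
    finally have "l \<cdot>\<^sub>v v = 0\<^sub>v m" using v by simp
    moreover obtain i where i: "i < m" "v $ i \<noteq> 0" using v by (auto simp: vec_eq_iff)
    ultimately have "(l \<cdot>\<^sub>v v) $ i = 0\<^sub>v m $ i" by simp
    then have "l * v $ i = 0" using i v by simp
    then have "l = 0" using i by simp
    then show ?thesis by simp
  next
    case False
    then obtain i where i: "i < n" "w $ i \<noteq> 0" using w by (auto simp: vec_eq_iff)
    from 1 2 have "l \<cdot>\<^sub>v w = of_nat M \<cdot>\<^sub>v w" by simp
    then have "(l \<cdot>\<^sub>v w) $ i = (of_nat M \<cdot>\<^sub>v w) $ i" by simp
    then have "l * w $ i = of_nat M * w $ i" using i w by simp
    then show ?thesis using i by simp
  qed
qed

lemma eig_M:
  assumes AB: "A * B = of_nat M \<cdot>\<^sub>m 1\<^sub>m n" and A: "A \<in> carrier_mat n m" and B: "B \<in> carrier_mat m n"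
    and n: "n > 0" and M: "M > 0"
  shows "eigenvalue (B * A) (of_nat M :: complex)"
proof -
  define e where "e = (unit_vec n 0 :: complex vec)"
  have e: "e \<in> carrier_vec n" "e \<noteq> 0\<^sub>v n" using n unfolding e_def
    by (auto simp: vec_eq_iff)
  define v where "v = B *\<^sub>v e"
  have v: "v \<in> carrier_vec m" using B e unfolding v_def by auto
  have Av: "A *\<^sub>v v = of_nat M \<cdot>\<^sub>v e"
    using A B e AB unfolding v_def by (simp del: assoc_mult_mat_vec add: assoc_mult_mat_vec[of A n m B n e, symmetric] smI)
  have "(B * A) *\<^sub>v v = B *\<^sub>v (of_nat M \<cdot>\<^sub>v e)"
    using A B v Av by (simp add: assoc_mult_mat_vec)
  also have "\<dots> = of_nat M \<cdot>\<^sub>v v" using B e unfolding v_def by (simp add: mult_mat_vec)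
  finally have 1: "(B * A) *\<^sub>v v = of_nat M \<cdot>\<^sub>v v" .
  have "v \<noteq> 0\<^sub>v m"
  proof
    assume "v = 0\<^sub>v m"
    then have "A *\<^sub>v v = 0\<^sub>v n" using A by (simp add: zvI)
    with Av have "of_nat M \<cdot>\<^sub>v e = 0\<^sub>v n" by simp
    then have "(of_nat M \<cdot>\<^sub>v e) $ 0 = 0" using n by simp
    then show False using n M unfolding e_def by simp
  qed
  then show ?thesis unfolding eigenvalue_def eigenvector_def using 1 v B A by auto
qed


theorem corollary1:
  fixes M N :: nat and C :: "nat \<Rightarrow> nat"
  assumes "M > 0" and "N > 0"
    and "\<And>n. n < N \<Longrightarrow> C n < M"
  shows "spectral_norm (Psi_mat M N C) = sqrt (real M)"
proof -
  let ?A = "Psi_mat M N C"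
  have A: "?A \<in> carrier_mat N (M*N)" by (simp add: Psi_mat_def)
  have B: "herm_adj ?A \<in> carrier_mat (M*N) N" by (simp add: Psi_mat_def herm_adj_def)
  have AB: "?A * herm_adj ?A = of_nat M \<cdot>\<^sub>m 1\<^sub>m N" using Psi_gram assms by blast
  have sub: "singular_values ?A \<subseteq> {0, sqrt (real M)}"
  proof
    fix \<sigma> assume "\<sigma> \<in> singular_values ?A"
    then have s: "\<sigma> \<ge> 0" "eigenvalue (herm_adj ?A * ?A) (complex_of_real (\<sigma>^2))"
      by (auto simp: singular_values_def)
    from eig_cases[OF AB A B s(2)] have "\<sigma>^2 = 0 \<or> \<sigma>^2 = real M"
      by (metis of_real_0 of_real_eq_iff of_real_of_nat_eq)
    then show "\<sigma> \<in> {0, sqrt (real M)}" using s(1)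
      by (auto simp: real_sqrt_unique)
  qed
  have mem: "sqrt (real M) \<in> singular_values ?A"
  proof -
    have "complex_of_real ((sqrt (real M))^2) = of_nat M" by simp
    then show ?thesis using eig_M[OF AB A B assms(2) assms(1)] unfolding singular_values_def
      by (simp only: mem_Collect_eq) simp
  qed
  have fin: "finite (singular_values ?A)" using sub finite_subset by blast
  show ?thesis unfolding spectral_norm_def
    by (rule Max_eqI[OF fin]) (use sub mem in auto)
qed

end
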